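(* Let $(R,+,\cdot)$ be a finite simple additively idempotent semiring with $|R|>2$ and let $(M,+)$ be a finite idempotent sub-irreducible $R$-semimodule. Then: (1) if $\infty_R x\ne\infty_M$ for some $x\in M$, then $(M,+)$ has a neutral element $0_M$, $x=0_M$, and $R0_M=\{0_M\}$; (2) $\infty_R$ is right absorbing if and only if $R\infty_M=\{\infty_M\}$; (3) if $\infty_R$ is not left absorbing then $(M,+)$ has a neutral element $0_M$ and $R0_M=\{0_M\}$; (4) if $\infty_R$ is left absorbing, $(M,+)$ is quotient-irreducible, $|M|>2$, and $(M,+)$ has a neutral element $0_M$, then $R0_M=M$.
   Context: A semiring is a nonempty set with a commutative semigroup operation $+$ and a semigroup operation $\cdot$ satisfying both distributive laws; simple if its only congruences are the identity and the full relation; additively idempotent if $r+r=r$, with order $x\le y:\Leftrightarrow x+y=y$ and greatest element $\infty_R=\sum_{r\in R}r$. An element $r$ is right absorbing if $sr=r$ for all $s\in R$, left absorbing if $rs=r$ for all $s$. An $R$-semimodule is a commutative semigroup $(M,+)$ with an action $R\times M\to M$ satisfying $r(sx)=(rs)x$, $(r+s)x=rx+sx$, $r(x+y)=rx+ry$; idempotent if $x+x=x$, with order defined likewise and greatest element $\infty_M$. $Rx=\{rx:r\in R\}$. A subsemimodule is a subsemigroup closed under the action; a semimodule congruence is an equivalence compatible with $+$ and the action. $M$ is quasitrivial if $rx=sx$ for all $r,s,x$; id-quasitrivial if $rx=x$ for all $r,x$; sub-irreducible if not quasitrivial and all proper subsemimodules are id-quasitrivial; quotient-irreducible if not quasitrivial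 and its only congruences are the identity and $M\times M$. *)

theory Defs
  imports Main
begin

text \<open>Semirings are modelled by the type class semiring (commutative semigroup +,
  semigroup *, both distributive laws; no zero or one required), with the whole
  type as carrier.\<close>

definition semiring_cong :: "('r::semiring \<times> 'r) set \<Rightarrow> bool" where
  "semiring_cong E \<longleftrightarrow> equiv UNIV E \<and>
     (\<forall>a b c d. (a, b) \<in> E \<and> (c, d) \<in> E \<longrightarrow> (a + c, b + d) \<in> E \<and> (a * c, b * d) \<in> E)"

definition simple_semiring :: "'r::semiring itself \<Rightarrow> bool" where
  "simple_semiring _ \<longleftrightarrow> (\<forall>E :: ('r \<times> 'r) set. semiring_cong E \<longrightarrow> E = Id \<or> E = UNIV)"

definition add_idem :: "'a::ab_semigroup_add itself \<Rightarrow> bool" where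
  "add_idem _ \<longleftrightarrow> (\<forall>x :: 'a. x + x = x)"

text \<open>Greatest element of a finite additively idempotent structure: the sum of
  all elements (a fold of + over the whole finite carrier, starting from an element
  of the carrier; by idempotency this is exactly the sum of all elements).\<close>
definition infty :: "'a::ab_semigroup_add" where
  "infty = Finite_Set.fold (+) (SOME x. True) (UNIV :: 'a set)"

definition semimodule :: "('r::semiring \<Rightarrow> 'm::ab_semigroup_add \<Rightarrow> 'm) \<Rightarrow> bool" where
  "semimodule act \<longleftrightarrow>
     (\<forall>r s x. act r (act s x) = act (r * s) x) \<and>
     (\<forall>r s x. act (r + s) x = act r x + act s x) \<and>
     (\<forall>r x y. act r (x + y) = act r x + act r y)"

definition subsemimodule :: "('r::semiring \<Rightarrow> 'm::ab_semigroup_add \<Rightarrow> 'm) \<Rightarrow> 'm set \<Rightarrow> bool" where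
  "subsemimodule act N \<longleftrightarrow> N \<noteq> {} \<and> (\<forall>x\<in>N. \<forall>y\<in>N. x + y \<in> N) \<and> (\<forall>r. \<forall>x\<in>N. act r x \<in> N)"

definition semimodule_cong :: "('r::semiring \<Rightarrow> 'm::ab_semigroup_add \<Rightarrow> 'm) \<Rightarrow> ('m \<times> 'm) set \<Rightarrow> bool" where
  "semimodule_cong act E \<longleftrightarrow> equiv UNIV E \<and>
     (\<forall>a b c d. (a, b) \<in> E \<and> (c, d) \<in> E \<longrightarrow> (a + c, b + d) \<in> E) \<and>
     (\<forall>r a b. (a, b) \<in> E \<longrightarrow> (act r a, act r b) \<in> E)"

definition quasitrivial :: "('r::semiring \<Rightarrow> 'm::ab_semigroup_add \<Rightarrow> 'm) \<Rightarrow> bool" where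
  "quasitrivial act \<longleftrightarrow> (\<forall>r s x. act r x = act s x)"

definition id_quasitrivial_on :: "('r::semiring \<Rightarrow> 'm::ab_semigroup_add \<Rightarrow> 'm) \<Rightarrow> 'm set \<Rightarrow> bool" where
  "id_quasitrivial_on act N \<longleftrightarrow> (\<forall>r. \<forall>x\<in>N. act r x = x)"

definition sub_irreducible :: "('r::semiring \<Rightarrow> 'm::ab_semigroup_add \<Rightarrow> 'm) \<Rightarrow> bool" where
  "sub_irreducible act \<longleftrightarrow> \<not> quasitrivial act \<and>
     (\<forall>N. subsemimodule act N \<and> N \<noteq> UNIV \<longrightarrow> id_quasitrivial_on act N)"

definition quotient_irreducible :: "('r::semiring \<Rightarrow> 'm::ab_semigroup_add \<Rightarrow> 'm) \<Rightarrow> bool" where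
  "quotient_irreducible act \<longleftrightarrow> \<not> quasitrivial act \<and>
     (\<forall>E. semimodule_cong act E \<longrightarrow> E = Id \<or> E = UNIV)"

definition additive_neutral :: "'m::ab_semigroup_add \<Rightarrow> bool" where
  "additive_neutral z \<longleftrightarrow> (\<forall>x. x + z = x)"

end

theory Submission
  imports Defs
begin

lemma infty_absorb:
  assumes "add_idem TYPE('a::{ab_semigroup_add,finite})"
  shows "y + (infty::'a) = infty"
proof -
  have idem: "\<And>u::'a. u + u = u" using assms unfolding add_idem_def by blast
  interpret comp_fun_idem "(+) :: 'a \<Rightarrow> 'a \<Rightarrow> 'a"
  proof
    fix x y :: 'a
    show "(+) y \<circ> (+) x = (+) x \<circ> (+) y" by (simp add: fun_eq_iff add.left_commute)
    show "(+) x \<circ> (+) x = (+) x"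
    proof
      fix z show "((+) x \<circ> (+) x) z = x + z" by (simp add: add.assoc[symmetric] idem)
    qed
  qed
  have "Finite_Set.fold (+) (SOME x. True) (insert y (UNIV::'a set))
        = y + Finite_Set.fold (+) (SOME x. True) (UNIV::'a set)"
    by (rule fold_insert_idem) simp
  then show ?thesis unfolding infty_def by simp
qed

lemma not_right_zero:
  assumes simp: "simple_semiring TYPE('r::{semiring,finite})"
    and idem: "add_idem TYPE('r)"
    and card: "card (UNIV :: 'r set) > 2"
  shows "\<exists>r s::'r. r * s \<noteq> s"
proof (rule ccontr)
  assume "\<not> ?thesis"
  then have rz: "\<And>r s::'r. r * s = s" by blast
  have id: "\<And>u::'r. u + u = u" using idem unfolding add_idem_def by blast
  obtain c :: 'r where c: "c \<noteq> infty"
  proof -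
    have "\<exists>c::'r. c \<noteq> infty"
    proof (rule ccontr)
      assume "\<not> (\<exists>c::'r. c \<noteq> infty)"
      then have "(UNIV::'r set) = {infty}" by auto
      then have "card (UNIV::'r set) = card {infty::'r}" by (rule arg_cong)
      then have "card (UNIV::'r set) = 1" by simp
      with card show False by simp
    qed
    then show ?thesis using that by blast
  qed
  define E where "E = {(a::'r, b). (a + c = c) = (b + c = c)}"
  have le: "\<And>a b. (a + b + c = c) = (a + c = c \<and> b + c = c)"
  proof -
    fix a b :: 'r
    show "(a + b + c = c) = (a + c = c \<and> b + c = c)"
    proof
      assume h: "a + b + c = c"
      have "a + c = a + (a + b + c)" using h by simp
      also have "\<dots> = a + b + c" by (simp add: add.assoc[symmetric] id)
      finally have 1: "a + c = c" using h by simp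
      have "b + c = b + (a + b + c)" using h by simp
      also have "\<dots> = a + b + c" by (metis add.assoc add.commute id)
      finally have 2: "b + c = c" using h by simp
      show "a + c = c \<and> b + c = c" using 1 2 by simp
    next
      assume "a + c = c \<and> b + c = c"
      then show "a + b + c = c" by (metis add.assoc)
    qed
  qed
  have cong: "semiring_cong E"
    unfolding semiring_cong_def E_def
  proof (intro conjI allI impI)
    show "equiv UNIV {(a::'r, b). (a + c = c) = (b + c = c)}"
      by (rule equivI) (auto simp: refl_on_def sym_def trans_def)
  next
    fix a b c' d :: 'r
    assume h: "(a, b) \<in> {(a, b). (a + c = c) = (b + c = c)} \<and> (c', d) \<in> {(a, b). (a + c = c) = (b + c = c)}"
    then show "(a + c', b + d) \<in> {(a, b). (a + c = c) = (b + c = c)}" using le by simp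
    show "(a * c', b * d) \<in> {(a, b). (a + c = c) = (b + c = c)}" using h by (simp add: rz)
  qed
  have "(c, infty) \<notin> E"
  proof
    assume "(c, infty) \<in> E"
    then have "infty + c = c" unfolding E_def using id by auto
    moreover have "c + (infty::'r) = infty" using infty_absorb[OF idem] .
    ultimately show False using c by (simp add: add.commute)
  qed
  then have "E \<noteq> UNIV" by auto
  moreover have "E \<noteq> Id"
  proof -
    obtain u v w :: 'r where uvw: "u \<noteq> v" "u \<noteq> w" "v \<noteq> w"
    proof -
      have "3 \<le> card (UNIV::'r set)" using card by simp
      then obtain A :: "'r set" where "card A = 3" "A \<subseteq> UNIV"
        by (rule obtain_subset_with_card_n)
      then obtain u v w where "A = {u,v,w}" "u \<noteq> v" "u \<noteq> w" "v \<noteq> w"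
        by (metis card_3_iff)
      then show ?thesis using that by blast
    qed
    have "\<exists>a b. a \<noteq> b \<and> (a + c = c) = (b + c = c)"
    proof (cases "(u + c = c) = (v + c = c)")
      case True then show ?thesis using uvw by blast
    next
      case F1: False
      show ?thesis
      proof (cases "(u + c = c) = (w + c = c)")
        case True then show ?thesis using uvw by blast
      next
        case False
        then have "(v + c = c) = (w + c = c)" using F1 by blast
        then show ?thesis using uvw by blast
      qed
    qed
    then obtain a b where ab: "a \<noteq> b" "(a + c = c) = (b + c = c)" by blast
    then have "(a, b) \<in> E" unfolding E_def by simp
    with ab(1) show ?thesis by auto
  qed
  ultimately show False using simp cong unfolding simple_semiring_def by blast
qed

theorem proposition2p22:
  fixes act :: "'r::{semiring, finite} \<Rightarrow> 'm::{ab_semigroup_add, finite} \<Rightarrow> 'm"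
  assumes "simple_semiring TYPE('r)"
    and "add_idem TYPE('r)"
    and "card (UNIV :: 'r set) > 2"
    and "semimodule act"
    and "add_idem TYPE('m)"
    and "sub_irreducible act"
  shows
    "(\<forall>x. act (infty :: 'r) x \<noteq> (infty :: 'm) \<longrightarrow>
        (\<exists>z. additive_neutral z \<and> x = z \<and> range (\<lambda>r. act r z) = {z}))
     \<and> ((\<forall>s::'r. s * infty = infty) \<longleftrightarrow> range (\<lambda>r. act r (infty :: 'm)) = {infty})
     \<and> (\<not> (\<forall>s::'r. infty * s = infty) \<longrightarrow>
          (\<exists>z. additive_neutral z \<and> range (\<lambda>r. act r z) = {z}))
     \<and> (\<forall>z. (\<forall>s::'r. infty * s = infty) \<and> quotient_irreducible act \<and> card (UNIV :: 'm set) > 2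
          \<and> additive_neutral z \<longrightarrow> range (\<lambda>r. act r z) = UNIV)"
proof -
  note simpl = assms(1) and idemR = assms(2) and cardR = assms(3)
  have idM: "\<And>u::'m. u + u = u" using assms(5) unfolding add_idem_def by blast
  have abR: "\<And>r::'r. r + infty = infty" using infty_absorb[OF idemR] .
  have abM: "\<And>y::'m. y + infty = infty" using infty_absorb[OF assms(5)] .
  have abM': "\<And>y::'m. infty + y = infty" using abM by (simp add: add.commute)
  have am: "\<And>r s x. act r (act s x) = act (r * s) x"
    and ad1: "\<And>r s x. act (r + s) x = act r x + act s x"
    and ad2: "\<And>r x y. act r (x + y) = act r x + act r y"
    using assms(4) unfolding semimodule_def by blast+
  have nq: "\<not> quasitrivial act" using assms(6) unfolding sub_irreducible_def by blast
  have si: "\<And>N. subsemimodule act N \<Longrightarrow> N \<noteq> UNIV \<Longrightarrow> \<forall>r. \<forall>x\<in>N. act r x = x"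
    using assms(6) unfolding sub_irreducible_def id_quasitrivial_on_def by blast
  have faithful: "\<And>r s. (\<And>y. act r y = act s y) \<Longrightarrow> r = s"
  proof -
    fix r s :: 'r
    assume h: "\<And>y. act r y = act s y"
    define F where "F = {(a::'r, b). \<forall>y. act a y = act b y}"
    have "semiring_cong F" unfolding semiring_cong_def F_def
      by (auto simp: equiv_def refl_on_def sym_def trans_def ad1 am[symmetric])
    moreover have "F \<noteq> UNIV"
    proof
      assume "F = UNIV"
      then have "quasitrivial act" unfolding quasitrivial_def F_def by (auto simp: set_eq_iff)
      with nq show False by blast
    qed
    ultimately have "F = Id" using simpl unfolding simple_semiring_def by blast
    moreover have "(r, s) \<in> F" using h unfolding F_def by auto
    ultimately show "r = s" by auto
  qed
  have mono: "\<And>r y. act r y = (infty::'m) \<Longrightarrow> act (infty::'r) y = infty"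
  proof -
    fix r y assume "act r y = (infty::'m)"
    then have "act (infty::'r) y = act (r + infty) y" using abR by simp
    also have "\<dots> = infty" using \<open>act r y = infty\<close> ad1 abM' by simp
    finally show "act (infty::'r) y = infty" .
  qed
  have orb: "\<And>y. subsemimodule act (range (\<lambda>r. act r y))"
    unfolding subsemimodule_def by (auto simp: ad1[symmetric] am)
  obtain y1 r1 where y1: "act (infty::'r) y1 = (infty::'m)" "act r1 y1 \<noteq> y1"
  proof -
    obtain r0 s0 :: 'r where rs: "r0 * s0 \<noteq> s0" using not_right_zero[OF simpl idemR cardR] by blast
    then obtain y where y: "act (r0 * s0) y \<noteq> act s0 y" using faithful by blast
    have "range (\<lambda>r. act r y) = UNIV"
    proof (rule ccontr)
      assume "range (\<lambda>r. act r y) \<noteq> UNIV"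
      then have "act r0 (act s0 y) = act s0 y" using si[OF orb] by blast
      with y show False by (simp add: am)
    qed
    then obtain t where "act t y = (infty::'m)" by (metis UNIV_I imageE)
    then have 1: "act (infty::'r) y = infty" by (rule mono)
    have 2: "act r0 y \<noteq> y \<or> act s0 y \<noteq> y" using y by (metis am)
    show ?thesis using that 1 2 by blast
  qed
  have P1: "\<And>x. act (infty::'r) x \<noteq> (infty::'m) \<Longrightarrow>
             additive_neutral x \<and> range (\<lambda>r. act r x) = {x}"
  proof -
    fix x assume hx: "act (infty::'r) x \<noteq> (infty::'m)"
    let ?a = "act (infty::'r) x"
    define N where "N = {y. act (infty::'r) y + ?a = ?a}"
    have lem: "\<And>r y. act ((infty::'r) * r) y + act (infty::'r) y = act infty y"
    proof -
      fix r y
      have "act (infty::'r) y = act ((infty::'r) * r + infty) y" using abR by simp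
      then show "act ((infty::'r) * r) y + act (infty::'r) y = act infty y" using ad1 by simp
    qed
    have "subsemimodule act N" unfolding subsemimodule_def
    proof (intro conjI ballI allI)
      show "N \<noteq> {}" using idM unfolding N_def by auto
    next
      fix y w assume "y \<in> N" "w \<in> N"
      then have h1: "act (infty::'r) y + ?a = ?a" and h2: "act (infty::'r) w + ?a = ?a"
        unfolding N_def by simp_all
      have "act (infty::'r) (y + w) + ?a = act (infty::'r) y + (act (infty::'r) w + ?a)"
        by (simp add: ad2 add.assoc)
      also have "\<dots> = ?a" using h1 h2 by simp
      finally show "y + w \<in> N" unfolding N_def by simp
    next
      fix r y assume "y \<in> N"
      then have "act (infty::'r) y + ?a = ?a" unfolding N_def by simp
      then have h: "act (infty::'r) y + ?a = ?a" .
      have "act ((infty::'r) * r) y + ?a = act ((infty::'r) * r) y + (act (infty::'r) y + ?a)"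
        using h by simp
      also have "\<dots> = (act ((infty::'r) * r) y + act (infty::'r) y) + ?a" by (simp only: add.assoc)
      also have "\<dots> = ?a" using lem[of r y] h by simp
      finally have "act ((infty::'r) * r) y + ?a = ?a" .
      then show "act r y \<in> N" unfolding N_def by (simp add: am)
    qed
    moreover have "N \<noteq> UNIV"
    proof
      assume "N = UNIV"
      then have "act (infty::'r) y1 + ?a = ?a" unfolding N_def by auto
      then show False using y1(1) abM' hx by simp
    qed
    moreover have "x \<in> N" unfolding N_def using idM by simp
    ultimately have fx: "\<And>r. act r x = x" using si[of N] by blast
    define Q where "Q = {y. x + y = y}"
    have "subsemimodule act Q" unfolding subsemimodule_def
    proof (intro conjI ballI allI)
      show "Q \<noteq> {}" using idM unfolding Q_def by auto
    next
      fix y w assume "y \<in> Q" "w \<in> Q"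
      then have "x + y = y" unfolding Q_def by simp
      then have "x + (y + w) = y + w" by (simp add: add.assoc[symmetric])
      then show "y + w \<in> Q" unfolding Q_def by simp
    next
      fix r y assume "y \<in> Q"
      then have "x + y = y" unfolding Q_def by simp
      then have "act r (x + y) = act r y" by simp
      then show "act r y \<in> Q" unfolding Q_def using ad2 fx by simp
    qed
    show "additive_neutral x \<and> range (\<lambda>r. act r x) = {x}"
    proof (cases "Q = UNIV")
      case True
      then show ?thesis unfolding additive_neutral_def Q_def using fx
        by (auto simp: add.commute set_eq_iff)
    next
      case False
      then have fQ: "\<And>r y. y \<in> Q \<Longrightarrow> act r y = y" using si \<open>subsemimodule act Q\<close> by blast
      have key: "\<And>r y. x + act r y = x + y"
      proof -
        fix r y
        have "x + (x + y) = x + y" by (simp add: add.assoc[symmetric] idM)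
        then have "x + y \<in> Q" unfolding Q_def by simp
        then have "act r (x + y) = x + y" by (rule fQ)
        then show "x + act r y = x + y" using ad2 fx by simp
      qed
      define C where "C = {y. x + y = (infty::'m)}"
      have "subsemimodule act C" unfolding subsemimodule_def
      proof (intro conjI ballI allI)
        show "C \<noteq> {}" using abM unfolding C_def by auto
      next
        fix y w assume "y \<in> C" "w \<in> C"
        then have "x + y = infty" unfolding C_def by simp
        then have "x + (y + w) = infty" by (simp add: add.assoc[symmetric] abM')
        then show "y + w \<in> C" unfolding C_def by simp
      next
        fix r y assume "y \<in> C"
        then show "act r y \<in> C" unfolding C_def using key by simp
      qed
      have "x + y1 = x + act (infty::'r) y1" by (rule key[symmetric])
      also have "\<dots> = infty" using y1(1) abM by simp
      finally have "y1 \<in> C" unfolding C_def by simp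
      show ?thesis
      proof (cases "C = UNIV")
        case True
        then have "x \<in> C" by simp
        then have "x + x = infty" unfolding C_def by simp
        then have "x = infty" using idM by simp
        then show ?thesis using hx fx by simp
      next
        case False
        have "\<forall>r. \<forall>x\<in>C. act r x = x" by (rule si[OF \<open>subsemimodule act C\<close> False])
        then have "act r1 y1 = y1" using \<open>y1 \<in> C\<close> by blast
        with y1(2) show ?thesis by simp
      qed
    qed
  qed
  have P2: "(\<forall>s::'r. s * infty = infty) \<longleftrightarrow> range (\<lambda>r. act r (infty :: 'm)) = {infty}"
  proof
    assume ra: "\<forall>s::'r. s * infty = infty"
    have "\<And>r. act r (infty::'m) = infty"
    proof -
      fix r :: 'r
      have "act r (infty::'m) = act r (act (infty::'r) y1)" using y1(1) by simp
      also have "\<dots> = act (r * infty) y1" by (rule am)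
      also have "\<dots> = infty" using ra y1(1) by simp
      finally show "act r (infty::'m) = infty" .
    qed
    then show "range (\<lambda>r. act r (infty :: 'm)) = {infty}" by auto
  next
    assume "range (\<lambda>r. act r (infty :: 'm)) = {infty}"
    then have fo: "\<And>r. act r (infty::'m) = infty" by (metis rangeI singletonD)
    show "\<forall>s::'r. s * infty = infty"
    proof
      fix s :: 'r
      show "s * infty = infty"
      proof (rule faithful)
        fix y
        show "act (s * infty) y = act infty y"
        proof (cases "range (\<lambda>r. act r y) = UNIV")
          case True
          then obtain t where "act t y = (infty::'m)" by (metis UNIV_I imageE)
          then have "act (infty::'r) y = infty" by (rule mono)
          then show ?thesis using fo am[symmetric, of s infty y] by simp
        next
          case False
          have "\<forall>r. \<forall>w\<in>range (\<lambda>r. act r y). act r w = w" by (rule si[OF orb False])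
          then have "act s (act infty y) = act infty y" by blast
          then show ?thesis by (simp add: am)
        qed
      qed
    qed
  qed
  have P3: "\<not> (\<forall>s::'r. infty * s = infty) \<longrightarrow>
          (\<exists>z. additive_neutral z \<and> range (\<lambda>r. act r z) = {z})"
  proof
    assume nla: "\<not> (\<forall>s::'r. infty * s = infty)"
    have "\<exists>x. act (infty::'r) x \<noteq> (infty::'m)"
    proof (rule ccontr)
      assume "\<not> (\<exists>x. act (infty::'r) x \<noteq> (infty::'m))"
      then have all: "\<And>x. act (infty::'r) x = (infty::'m)" by blast
      have "\<forall>s::'r. infty * s = infty"
      proof
        fix s :: 'r
        show "infty * s = infty"
        proof (rule faithful)
          fix y
          have "act ((infty::'r) * s) y = act infty (act s y)" by (simp add: am)
          then show "act ((infty::'r) * s) y = act infty y" using all by simp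
        qed
      qed
      with nla show False by blast
    qed
    then obtain x where "act (infty::'r) x \<noteq> (infty::'m)" by blast
    from P1[OF this] show "\<exists>z. additive_neutral z \<and> range (\<lambda>r. act r z) = {z}" by blast
  qed
  have P4: "\<forall>z. (\<forall>s::'r. infty * s = infty) \<and> quotient_irreducible act \<and> card (UNIV :: 'm set) > 2
          \<and> additive_neutral z \<longrightarrow> range (\<lambda>r. act r z) = UNIV"
  proof (intro allI impI)
    fix z :: 'm
    assume H: "(\<forall>s::'r. infty * s = infty) \<and> quotient_irreducible act \<and> card (UNIV :: 'm set) > 2
          \<and> additive_neutral z"
    then have la: "\<And>s::'r. infty * s = infty" and qi: "quotient_irreducible act"
      and nz: "\<And>y. y + z = y" unfolding additive_neutral_def by blast+
    define E where "E = {(y::'m, y'). act (infty::'r) y = act (infty::'r) y'}"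
    have "semimodule_cong act E" unfolding semimodule_cong_def
    proof (intro conjI allI impI)
      show "equiv UNIV E" unfolding E_def
        by (rule equivI) (auto simp: refl_on_def sym_def trans_def)
    next
      fix a b c d assume "(a, b) \<in> E \<and> (c, d) \<in> E"
      then show "(a + c, b + d) \<in> E" unfolding E_def by (simp add: ad2)
    next
      fix r a b assume "(a, b) \<in> E"
      then show "(act r a, act r b) \<in> E" unfolding E_def by (simp add: am la)
    qed
    then have "E = Id \<or> E = UNIV" using qi unfolding quotient_irreducible_def by blast
    moreover have "E \<noteq> Id"
    proof
      assume "E = Id"
      have "\<And>r y. act r y = y"
      proof -
        fix r y
        have "(act r y, y) \<in> E" unfolding E_def by (simp add: am la)
        then show "act r y = y" using \<open>E = Id\<close> by simp
      qed
      then have "quasitrivial act" unfolding quasitrivial_def by simp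
      with nq show False by blast
    qed
    ultimately have "E = UNIV" by blast
    then have "(z, y1) \<in> E" by simp
    then have iz: "act (infty::'r) z = infty" unfolding E_def using y1(1) by simp
    show "range (\<lambda>r. act r z) = UNIV"
    proof (rule ccontr)
      assume nU: "range (\<lambda>r. act r z) \<noteq> UNIV"
      have fz: "\<And>r s. act r (act s z) = act s z" using si[OF orb nU] by blast
      define K where "K = {(r::'r, s). act r z = act s z}"
      have "semiring_cong K" unfolding semiring_cong_def
      proof (intro conjI allI impI)
        show "equiv UNIV K" unfolding K_def
          by (rule equivI) (auto simp: refl_on_def sym_def trans_def)
      next
        fix a b c d assume h: "(a, b) \<in> K \<and> (c, d) \<in> K"
        then show "(a + c, b + d) \<in> K" unfolding K_def by (simp add: ad1)
        have "act (a * c) z = act c z" using fz[of a c] by (simp add: am)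
        moreover have "act (b * d) z = act d z" using fz[of b d] by (simp add: am)
        ultimately show "(a * c, b * d) \<in> K" using h unfolding K_def by simp
      qed
      then have "K = Id \<or> K = UNIV" using simpl unfolding simple_semiring_def by blast
      moreover have "K \<noteq> Id"
      proof
        assume "K = Id"
        have "\<And>r s::'r. r * s = s"
        proof -
          fix r s :: 'r
          have "(r * s, s) \<in> K" unfolding K_def using fz[of r s] by (simp add: am)
          then show "r * s = s" using \<open>K = Id\<close> by simp
        qed
        then show False using not_right_zero[OF simpl idemR cardR] by blast
      qed
      ultimately have "K = UNIV" by blast
      have rz: "\<And>r. act r z = infty"
      proof -
        fix r
        have "(r, infty) \<in> K" using \<open>K = UNIV\<close> by simp
        then show "act r z = infty" unfolding K_def using iz by simp
      qed
      have "\<And>r y. act r y = infty"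
      proof -
        fix r y
        have "act r y = act r (y + z)" using nz by simp
        also have "\<dots> = act r y + infty" using ad2 rz by simp
        also have "\<dots> = infty" by (rule abM)
        finally show "act r y = infty" .
      qed
      then have "quasitrivial act" unfolding quasitrivial_def by simp
      with nq show False by blast
    qed
  qed
  show ?thesis using P1 P2 P3 P4 by blast
qed

end
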